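(* Let $G$ be a compact group and let $x\in G$ be an element such that $Pr(\langle x\rangle,G)>0$. Then there is a positive integer $e$ such that $x^e$ is contained in an abstract (not necessarily closed) subgroup $N$ of $G$ which is torsion-free, abelian, normal in $G$, and contained in $FC(G)$.
   Context: For a closed subgroup $H$ of a compact group $G$, $Pr(H,G)=(\mu_H\times\mu_G)(\{(h,g)\in H\times G: hg=gh\})$, where $\mu_H,\mu_G$ are the normalized Haar measures. $\langle x\rangle$ is the closed subgroup topologically generated by $x$. $FC(G)$ denotes the set of all elements $y\in G$ whose centralizer $C_G(y)$ has finite index in $G$ (an abstract subgroup of $G$). *)

theory Defs
  imports "HOL-Analysis.Analysis" "HOL-Algebra.Algebra"
begin

definition compact_group :: "('a, 'b) monoid_scheme \<Rightarrow> 'a topology \<Rightarrow> bool" where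
  "compact_group G T \<longleftrightarrow> group G \<and> topspace T = carrier G
     \<and> continuous_map (prod_topology T T) T (\<lambda>(a, b). a \<otimes>\<^bsub>G\<^esub> b)
     \<and> continuous_map T T (\<lambda>a. inv\<^bsub>G\<^esub> a)
     \<and> compact_space T \<and> Hausdorff_space T"

definition borel_sets_of :: "'a topology \<Rightarrow> 'a set set" where
  "borel_sets_of T = sigma_sets (topspace T) {U. openin T U}"

definition normalized_haar :: "('a, 'b) monoid_scheme \<Rightarrow> 'a topology \<Rightarrow> 'a set \<Rightarrow> 'a measure \<Rightarrow> bool" where
  "normalized_haar G T H \<mu> \<longleftrightarrow>
     space \<mu> = H \<and> sets \<mu> = borel_sets_of (subtopology T H) \<and> emeasure \<mu> H = 1
     \<and> (\<forall>h\<in>H. \<forall>A\<in>sets \<mu>. emeasure \<mu> (h <#\<^bsub>G\<^esub> A) = emeasure \<mu> A)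
     \<and> (\<forall>A\<in>sets \<mu>. emeasure \<mu> A =
           (INF U\<in>{U. openin (subtopology T H) U \<and> A \<subseteq> U}. emeasure \<mu> U))
     \<and> (\<forall>U. openin (subtopology T H) U \<longrightarrow> emeasure \<mu> U =
           (SUP K\<in>{K. compactin (subtopology T H) K \<and> K \<subseteq> U}. emeasure \<mu> K))"

definition centralizer :: "('a, 'b) monoid_scheme \<Rightarrow> 'a \<Rightarrow> 'a set" where
  "centralizer G y = {g \<in> carrier G. g \<otimes>\<^bsub>G\<^esub> y = y \<otimes>\<^bsub>G\<^esub> g}"

text \<open>Pr(H,G) = (mu_H x mu_G){(h,g). hg = gh}, written via Fubini as the integral over H
  of mu_G(C_G(h)) (C_G(h) is closed, hence Borel).\<close>
definition commuting_prob :: "('a, 'b) monoid_scheme \<Rightarrow> 'a measure \<Rightarrow> 'a measure \<Rightarrow> ennreal" where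
  "commuting_prob G \<mu>H \<mu>G = (\<integral>\<^sup>+ h. emeasure \<mu>G (centralizer G h) \<partial>\<mu>H)"

definition top_gen :: "('a, 'b) monoid_scheme \<Rightarrow> 'a topology \<Rightarrow> 'a \<Rightarrow> 'a set" where
  "top_gen G T x = T closure_of (generate G {x})"

definition FC :: "('a, 'b) monoid_scheme \<Rightarrow> 'a set" where
  "FC G = {y \<in> carrier G. finite (rcosets\<^bsub>G\<^esub> (centralizer G y))}"

definition torsion_free :: "('a, 'b) monoid_scheme \<Rightarrow> 'a set \<Rightarrow> bool" where
  "torsion_free G N \<longleftrightarrow> (\<forall>y\<in>N. \<forall>n::nat. n > 0 \<longrightarrow> y [^]\<^bsub>G\<^esub> n = \<one>\<^bsub>G\<^esub> \<longrightarrow> y = \<one>\<^bsub>G\<^esub>)"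

end

theory Submission
  imports Defs
begin

lemma fin_transfer:
  assumes "finite (k ` S)" and "\<forall>g\<in>S. \<forall>g'\<in>S. k g = k g' \<longrightarrow> p g = p g'"
  shows "finite (p ` S)"
proof -
  have "p ` S \<subseteq> (\<lambda>v. p (SOME g. g \<in> S \<and> k g = v)) ` (k ` S)"
  proof
    fix u assume "u \<in> p ` S"
    then obtain g where g: "g \<in> S" "u = p g" by auto
    have ex: "\<exists>g'. g' \<in> S \<and> k g' = k g" using g by auto
    have "(SOME g'. g' \<in> S \<and> k g' = k g) \<in> S \<and> k (SOME g'. g' \<in> S \<and> k g' = k g) = k g"
      by (rule someI_ex[OF ex])
    then have "p (SOME g'. g' \<in> S \<and> k g' = k g) = p g" using assms(2) g by blast
    then show "u \<in> (\<lambda>v. p (SOME g. g \<in> S \<and> k g = v)) ` (k ` S)" using g by force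
  qed
  then show ?thesis using assms(1) finite_subset by blast
qed

definition cls :: "('a, 'b) monoid_scheme \<Rightarrow> 'a \<Rightarrow> 'a set" where
  "cls G a = (\<lambda>g. g \<otimes>\<^bsub>G\<^esub> a \<otimes>\<^bsub>G\<^esub> inv\<^bsub>G\<^esub> g) ` carrier G"

context group begin

lemma inv_cancel_l [simp]: "x \<in> carrier G \<Longrightarrow> y \<in> carrier G \<Longrightarrow> x \<otimes> (inv x \<otimes> y) = y"
  by (simp add: m_assoc[symmetric])
lemma inv_cancel_l2 [simp]: "x \<in> carrier G \<Longrightarrow> y \<in> carrier G \<Longrightarrow> inv x \<otimes> (x \<otimes> y) = y"
  by (simp add: m_assoc[symmetric])

lemma centralizer_subgroup:
  assumes a: "a \<in> carrier G"
  shows "subgroup (centralizer G a) G"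
proof (rule subgroupI)
  show "centralizer G a \<subseteq> carrier G" unfolding centralizer_def by auto
  show "centralizer G a \<noteq> {}" using a unfolding centralizer_def by (auto intro!: exI[of _ \<one>])
next
  fix h assume h: "h \<in> centralizer G a"
  then have hc: "h \<in> carrier G" and e: "h \<otimes> a = a \<otimes> h" unfolding centralizer_def by auto
  have "inv h \<otimes> a = inv h \<otimes> (a \<otimes> h) \<otimes> inv h" using hc a by (simp add: m_assoc)
  also have "\<dots> = a \<otimes> inv h" using hc a e[symmetric] by (simp add: m_assoc)
  finally show "inv h \<in> centralizer G a" unfolding centralizer_def using hc by auto
next
  fix h k assume "h \<in> centralizer G a" "k \<in> centralizer G a"
  then have hc: "h \<in> carrier G" "k \<in> carrier G" and e: "h \<otimes> a = a \<otimes> h" "k \<otimes> a = a \<otimes> k"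
    unfolding centralizer_def by auto
  have "h \<otimes> k \<otimes> a = a \<otimes> (h \<otimes> k)"
    using hc a e by (metis m_assoc)
  then show "h \<otimes> k \<in> centralizer G a" unfolding centralizer_def using hc by auto
qed

lemma cls_alt:
  assumes "a \<in> carrier G"
  shows "cls G a = (\<lambda>g. inv g \<otimes> a \<otimes> g) ` carrier G"
proof -
  have "(\<lambda>g. inv g \<otimes> a \<otimes> g) ` carrier G = (\<lambda>g. g \<otimes> a \<otimes> inv g) ` ((\<lambda>g. inv g) ` carrier G)"
    by (auto simp: image_iff)
  also have "(\<lambda>g. inv g) ` carrier G = carrier G"
    by (auto simp: image_iff) (metis inv_closed inv_inv)
  finally show ?thesis unfolding cls_def by simp
qed

lemma cls_FC:
  assumes a: "a \<in> carrier G" and fin: "finite (cls G a)"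
  shows "a \<in> FC G"
proof -
  have "finite ((\<lambda>g. centralizer G a #> g) ` carrier G)"
  proof (rule fin_transfer[where k = "\<lambda>g. inv g \<otimes> a \<otimes> g"])
    show "finite ((\<lambda>g. inv g \<otimes> a \<otimes> g) ` carrier G)" using fin cls_alt[OF a] by simp
    show "\<forall>g\<in>carrier G. \<forall>g'\<in>carrier G. inv g \<otimes> a \<otimes> g = inv g' \<otimes> a \<otimes> g' \<longrightarrow>
           centralizer G a #> g = centralizer G a #> g'"
    proof (intro ballI impI)
      fix g g' assume g: "g \<in> carrier G" and g': "g' \<in> carrier G"
        and eq: "inv g \<otimes> a \<otimes> g = inv g' \<otimes> a \<otimes> g'"
      have "g' \<otimes> inv g \<otimes> a = a \<otimes> (g' \<otimes> inv g)"
      proof -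
        have "g' \<otimes> (inv g \<otimes> a \<otimes> g) \<otimes> inv g = g' \<otimes> (inv g' \<otimes> a \<otimes> g') \<otimes> inv g" using eq by simp
        moreover have "g' \<otimes> (inv g \<otimes> a \<otimes> g) \<otimes> inv g = g' \<otimes> inv g \<otimes> a" using g g' a by (simp add: m_assoc)
        moreover have "g' \<otimes> (inv g' \<otimes> a \<otimes> g') \<otimes> inv g = a \<otimes> (g' \<otimes> inv g)" using g g' a by (simp add: m_assoc)
        ultimately show ?thesis by simp
      qed
      then have c: "g' \<otimes> inv g \<in> centralizer G a" unfolding centralizer_def using g g' by auto
      have "centralizer G a #> g' = centralizer G a #> ((g' \<otimes> inv g) \<otimes> g)"
        using g g' by (simp add: m_assoc)
      also have "\<dots> = (centralizer G a #> (g' \<otimes> inv g)) #> g"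
        using g g' by (simp add: coset_mult_assoc centralizer_def)
      also have "centralizer G a #> (g' \<otimes> inv g) = centralizer G a"
        using subgroup.rcos_const[OF centralizer_subgroup[OF a] is_group c] .
      finally show "centralizer G a #> g = centralizer G a #> g'" by simp
    qed
  qed
  moreover have "rcosets (centralizer G a) = (\<lambda>g. centralizer G a #> g) ` carrier G"
    unfolding RCOSETS_def by auto
  ultimately show ?thesis unfolding FC_def using a by simp
qed

lemma conj_closed [simp]: "a \<in> carrier G \<Longrightarrow> g \<in> carrier G \<Longrightarrow> g \<otimes> a \<otimes> inv g \<in> carrier G"
  by simp

lemma conj_cancel:
  assumes "a \<in> carrier G" "b \<in> carrier G" "h \<in> carrier G" "h \<otimes> a \<otimes> inv h = h \<otimes> b \<otimes> inv h"
  shows "a = b"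
proof -
  have "a = inv h \<otimes> (h \<otimes> a \<otimes> inv h) \<otimes> h" using assms by (simp add: m_assoc)
  also have "\<dots> = inv h \<otimes> (h \<otimes> b \<otimes> inv h) \<otimes> h" using assms by simp
  also have "\<dots> = b" using assms by (simp add: m_assoc)
  finally show ?thesis .
qed

lemma conj_mult:
  assumes "a \<in> carrier G" "b \<in> carrier G" "g \<in> carrier G"
  shows "g \<otimes> (a \<otimes> b) \<otimes> inv g = (g \<otimes> a \<otimes> inv g) \<otimes> (g \<otimes> b \<otimes> inv g)"
  using assms by (simp add: m_assoc)

lemma conj_conj:
  assumes "a \<in> carrier G" "g \<in> carrier G" "h \<in> carrier G"
  shows "h \<otimes> (g \<otimes> a \<otimes> inv g) \<otimes> inv h = (h \<otimes> g) \<otimes> a \<otimes> inv (h \<otimes> g)"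
  using assms by (simp add: m_assoc inv_mult_group)

lemma cls_sub: "a \<in> carrier G \<Longrightarrow> cls G a \<subseteq> carrier G"
  unfolding cls_def by auto

lemma cls_mem: "a \<in> carrier G \<Longrightarrow> a \<in> cls G a"
  unfolding cls_def by (auto intro!: image_eqI[of _ _ \<one>])

lemma cls_conj_mem:
  assumes "a \<in> carrier G" "w \<in> cls G a" "h \<in> carrier G"
  shows "h \<otimes> w \<otimes> inv h \<in> cls G a"
proof -
  obtain g where g: "g \<in> carrier G" "w = g \<otimes> a \<otimes> inv g" using assms unfolding cls_def by auto
  then have "h \<otimes> w \<otimes> inv h = (h \<otimes> g) \<otimes> a \<otimes> inv (h \<otimes> g)" using conj_conj assms by simp
  then show ?thesis unfolding cls_def using g assms by auto
qed

lemma cls_conj: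
  assumes a: "a \<in> carrier G" and h: "h \<in> carrier G"
  shows "cls G (h \<otimes> a \<otimes> inv h) = cls G a"
proof
  show "cls G (h \<otimes> a \<otimes> inv h) \<subseteq> cls G a"
  proof
    fix u assume "u \<in> cls G (h \<otimes> a \<otimes> inv h)"
    then obtain g where g: "g \<in> carrier G" "u = g \<otimes> (h \<otimes> a \<otimes> inv h) \<otimes> inv g" unfolding cls_def by auto
    then have "u = (g \<otimes> h) \<otimes> a \<otimes> inv (g \<otimes> h)" using conj_conj a h by simp
    then show "u \<in> cls G a" unfolding cls_def using g h by auto
  qed
next
  show "cls G a \<subseteq> cls G (h \<otimes> a \<otimes> inv h)"
  proof
    fix u assume "u \<in> cls G a"
    then obtain g where g: "g \<in> carrier G" "u = g \<otimes> a \<otimes> inv g" unfolding cls_def by auto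
    have "inv h \<otimes> (h \<otimes> a \<otimes> inv h) \<otimes> inv (inv h) = a" using a h by (simp add: m_assoc)
    then have "u = g \<otimes> (inv h \<otimes> (h \<otimes> a \<otimes> inv h) \<otimes> inv (inv h)) \<otimes> inv g" using g by simp
    also have "\<dots> = (g \<otimes> inv h) \<otimes> (h \<otimes> a \<otimes> inv h) \<otimes> inv (g \<otimes> inv h)"
      using a h g by (intro conj_conj) auto
    finally show "u \<in> cls G (h \<otimes> a \<otimes> inv h)" unfolding cls_def using g h by auto
  qed
qed

definition FCc where "FCc = {a \<in> carrier G. finite (cls G a)}"

lemma FCc_subgroup: "subgroup FCc G"
proof (rule subgroupI)
  show "FCc \<subseteq> carrier G" unfolding FCc_def by auto
  have "cls G \<one> = {\<one>}" unfolding cls_def by auto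
  then show "FCc \<noteq> {}" unfolding FCc_def by auto
next
  fix a assume "a \<in> FCc"
  then have a: "a \<in> carrier G" "finite (cls G a)" unfolding FCc_def by auto
  have "cls G (inv a) \<subseteq> (\<lambda>u. inv u) ` cls G a"
  proof
    fix u assume "u \<in> cls G (inv a)"
    then obtain g where g: "g \<in> carrier G" "u = g \<otimes> inv a \<otimes> inv g" unfolding cls_def by auto
    then have "u = inv (g \<otimes> a \<otimes> inv g)" using a by (simp add: inv_mult_group m_assoc)
    then show "u \<in> (\<lambda>u. inv u) ` cls G a" unfolding cls_def using g by auto
  qed
  then show "inv a \<in> FCc" unfolding FCc_def using a finite_subset by auto
next
  fix a b assume "a \<in> FCc" "b \<in> FCc"
  then have a: "a \<in> carrier G" "finite (cls G a)" and b: "b \<in> carrier G" "finite (cls G b)"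
    unfolding FCc_def by auto
  have "cls G (a \<otimes> b) \<subseteq> (\<lambda>(u, v). u \<otimes> v) ` (cls G a \<times> cls G b)"
  proof
    fix u assume "u \<in> cls G (a \<otimes> b)"
    then obtain g where g: "g \<in> carrier G" "u = g \<otimes> (a \<otimes> b) \<otimes> inv g" unfolding cls_def by auto
    then have "u = (g \<otimes> a \<otimes> inv g) \<otimes> (g \<otimes> b \<otimes> inv g)" using conj_mult a b by simp
    then show "u \<in> (\<lambda>(u, v). u \<otimes> v) ` (cls G a \<times> cls G b)"
      by (intro image_eqI[where x="(g \<otimes> a \<otimes> inv g, g \<otimes> b \<otimes> inv g)"]) (auto simp: cls_def g)
  qed
  moreover have "finite ((\<lambda>(u, v). u \<otimes> v) ` (cls G a \<times> cls G b))" using a b by simp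
  ultimately show "a \<otimes> b \<in> FCc" unfolding FCc_def using a b finite_subset by blast
qed

lemma conj_pow:
  assumes "a \<in> carrier G" "g \<in> carrier G"
  shows "(g \<otimes> a \<otimes> inv g) [^] (n::nat) = g \<otimes> a [^] n \<otimes> inv g"
proof (induction n)
  case 0 then show ?case using assms by simp
next
  case (Suc n)
  have "(g \<otimes> a \<otimes> inv g) [^] Suc n = (g \<otimes> a [^] n \<otimes> inv g) \<otimes> (g \<otimes> a \<otimes> inv g)"
    using Suc by simp
  also have "\<dots> = g \<otimes> (a [^] n \<otimes> a) \<otimes> inv g" using assms by (simp add: m_assoc)
  finally show ?case by simp
qed

lemma comm_generate:
  assumes u: "u \<in> carrier G" and S: "S \<subseteq> carrier G" and c: "\<forall>s\<in>S. u \<otimes> s = s \<otimes> u"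
    and t: "t \<in> generate G S"
  shows "u \<otimes> t = t \<otimes> u"
proof -
  have "S \<subseteq> centralizer G u" using S c unfolding centralizer_def by auto
  then have "generate G S \<subseteq> centralizer G u"
    using generate_subgroup_incl centralizer_subgroup[OF u] by blast
  then show ?thesis using t unfolding centralizer_def by auto
qed

lemma comm_generate2:
  assumes S: "S \<subseteq> carrier G" and c: "\<forall>s\<in>S. \<forall>s'\<in>S. s \<otimes> s' = s' \<otimes> s"
    and a: "a \<in> generate G S" and b: "b \<in> generate G S"
  shows "a \<otimes> b = b \<otimes> a"
proof -
  have bc: "b \<in> carrier G" using b generate_in_carrier S by blast
  have "\<forall>s\<in>S. b \<otimes> s = s \<otimes> b"
  proof
    fix s assume s: "s \<in> S"
    then have "s \<otimes> b = b \<otimes> s" using comm_generate[of s S b] S c b by blast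
    then show "b \<otimes> s = s \<otimes> b" by simp
  qed
  then show ?thesis using comm_generate[OF bc S _ a] by simp
qed

lemma gen_insert:
  assumes w: "w \<in> carrier G" and W: "W \<subseteq> carrier G" and c: "\<forall>s\<in>W. w \<otimes> s = s \<otimes> w"
    and t: "t \<in> generate G (insert w W)"
  shows "\<exists>b\<in>generate G W. \<exists>j::int. t = b \<otimes> w [^] j"
  using t
proof (induction rule: generate.induct)
  case one
  have "\<one> = \<one> \<otimes> w [^] (0::int)" using w by simp
  then show ?case using generate.one[of G W] by blast
next
  case (incl h)
  then show ?case
  proof
    assume h: "h = w"
    have "h = \<one> \<otimes> w [^] (1::int)" using w h by simp
    then show ?thesis using generate.one[of G W] by blast
  next
    assume h: "h \<in> W"
    have "h = h \<otimes> w [^] (0::int)" using W h by auto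
    then show ?thesis using generate.incl[OF h, of G] by blast
  qed
next
  case (inv h)
  then show ?case
  proof
    assume h: "h = w"
    have "w [^] (- 1::int) = inv (w [^] (1::int))" using int_pow_neg[OF w] by blast
    then have "inv h = \<one> \<otimes> w [^] (- 1::int)" using w h by simp
    then show ?thesis using generate.one[of G W] by blast
  next
    assume h: "h \<in> W"
    have "inv h = inv h \<otimes> w [^] (0::int)" using W h by auto
    then show ?thesis using generate.inv[OF h, of G] by blast
  qed
next
  case (eng h1 h2)
  obtain b1 and j1 :: int where b1: "b1 \<in> generate G W" "h1 = b1 \<otimes> w [^] j1" using eng.IH(1) by blast
  obtain b2 and j2 :: int where b2: "b2 \<in> generate G W" "h2 = b2 \<otimes> w [^] j2" using eng.IH(2) by blast
  have b1c: "b1 \<in> carrier G" by (rule generate_in_carrier[OF W b1(1)])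
  have b2c: "b2 \<in> carrier G" by (rule generate_in_carrier[OF W b2(1)])
  have wj1: "w [^] j1 \<in> carrier G" "w [^] j2 \<in> carrier G" using w by auto
  have wb: "w \<otimes> b2 = b2 \<otimes> w" using comm_generate[OF w W c b2(1)] .
  have wg: "w [^] j1 \<in> generate G {w}"
    by (rule subgroup_int_pow_closed[OF generate_is_subgroup generate.incl]) (use w in auto)
  have cm: "b2 \<otimes> w [^] j1 = w [^] j1 \<otimes> b2"
    by (rule comm_generate[OF b2c _ _ wg]) (use w wb in auto)
  have "h1 \<otimes> h2 = (b1 \<otimes> w [^] j1) \<otimes> (b2 \<otimes> w [^] j2)" using b1(2) b2(2) by simp
  also have "\<dots> = b1 \<otimes> ((w [^] j1 \<otimes> b2) \<otimes> w [^] j2)"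
    using b1c b2c wj1 by (simp add: m_assoc)
  also have "\<dots> = b1 \<otimes> ((b2 \<otimes> w [^] j1) \<otimes> w [^] j2)" using cm by simp
  also have "\<dots> = (b1 \<otimes> b2) \<otimes> (w [^] j1 \<otimes> w [^] j2)"
    using b1c b2c wj1 by (simp add: m_assoc)
  also have "w [^] j1 \<otimes> w [^] j2 = w [^] (j1 + j2)" using int_pow_mult[OF w] by simp
  finally have "h1 \<otimes> h2 = (b1 \<otimes> b2) \<otimes> w [^] (j1 + j2)" .
  moreover have "b1 \<otimes> b2 \<in> generate G W" using b1(1) b2(1) by (rule generate.eng)
  ultimately show ?case by blast
qed

lemma torsion_bound:
  assumes "finite W" "W \<subseteq> carrier G" "\<forall>s\<in>W. \<forall>s'\<in>W. s \<otimes> s' = s' \<otimes> s"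
  shows "\<exists>d::nat. d > 0 \<and> (\<forall>t\<in>generate G W. (\<exists>n::nat. n > 0 \<and> t [^] n = \<one>) \<longrightarrow> t [^] d = \<one>)"
  using assms
proof (induction W rule: finite_induct)
  case empty
  have e: "t = \<one>" if "t \<in> generate G {}" for t using that by (induction rule: generate.induct) auto
  show ?case
  proof (intro exI[of _ "1::nat"] conjI ballI impI)
    fix t assume "t \<in> generate G {}"
    then have "t = \<one>" using e by blast
    then show "t [^] (1::nat) = \<one>" by simp
  qed simp
next
  case (insert w W)
  have w: "w \<in> carrier G" and W: "W \<subseteq> carrier G" using insert.prems(1) by auto
  have cW: "\<forall>s\<in>W. \<forall>s'\<in>W. s \<otimes> s' = s' \<otimes> s" using insert.prems(2) by blast
  have cw: "\<forall>s\<in>W. w \<otimes> s = s \<otimes> w" using insert.prems(2) by blast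
  obtain dB :: nat where dB: "dB > 0" "\<forall>t\<in>generate G W. (\<exists>n::nat. n > 0 \<and> t [^] n = \<one>) \<longrightarrow> t [^] dB = \<one>"
    using insert.IH[OF W cW] by blast
  have sgW: "subgroup (generate G W) G" using generate_is_subgroup[OF W] .
  show ?case
  proof (cases "\<exists>q::nat. q > 0 \<and> w [^] q \<in> generate G W")
    case True
    then obtain q :: nat where q: "q > 0" "w [^] q \<in> generate G W" by blast
    show ?thesis
    proof (intro exI[of _ "q * dB"] conjI ballI impI)
      show "q * dB > 0" using q dB by simp
      fix t assume t: "t \<in> generate G (insert w W)" and tor: "\<exists>n::nat. n > 0 \<and> t [^] n = \<one>"
      obtain n :: nat where n: "n > 0" "t [^] n = \<one>" using tor by blast
      obtain b j where b: "b \<in> generate G W" "t = b \<otimes> w [^] (j::int)" using gen_insert[OF w W cw t] by blast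
      have bc: "b \<in> carrier G" using b generate_in_carrier W by blast
      have "w \<otimes> b = b \<otimes> w" using comm_generate[OF w W cw b(1)] .
      then have wb: "w \<otimes> b = b \<otimes> w" .
      have wg: "w [^] j \<in> generate G {w}"
        by (rule subgroup_int_pow_closed[OF generate_is_subgroup generate.incl]) (use w in auto)
      have bw: "b \<otimes> w [^] j = w [^] j \<otimes> b"
        by (rule comm_generate[OF bc _ _ wg]) (use w wb in auto)
      have "(w [^] j) [^] q = (w [^] j) [^] (int q)" by (simp only: int_pow_int)
      also have "\<dots> = w [^] (j * int q)" using w by (rule int_pow_pow)
      also have "\<dots> = w [^] (int q * j)" by (simp only: mult.commute)
      also have "\<dots> = (w [^] (int q)) [^] j" using w by (rule int_pow_pow[symmetric])
      also have "\<dots> = (w [^] q) [^] j" by (simp only: int_pow_int)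
      finally have e1: "(w [^] j) [^] q = (w [^] q) [^] j" .
      have "t [^] q = b [^] q \<otimes> (w [^] j) [^] q" unfolding b(2) by (rule pow_mult_distrib[OF bw bc int_pow_closed[OF w]])
      then have tq': "t [^] q = b [^] q \<otimes> (w [^] q) [^] j" using e1 by simp
      have "b [^] q \<in> generate G W" by (metis int_pow_int subgroup_int_pow_closed[OF sgW b(1)])
      moreover have "(w [^] q) [^] j \<in> generate G W" by (rule subgroup_int_pow_closed[OF sgW q(2)])
      ultimately have tq: "t [^] q \<in> generate G W" using tq' subgroup.m_closed[OF sgW] by simp
      have tc: "t \<in> carrier G" using generate_in_carrier[OF insert.prems(1) t] .
      have "(t [^] q) [^] n = t [^] (q * n)" using tc by (simp add: nat_pow_pow)
      also have "\<dots> = (t [^] n) [^] q" using tc by (simp add: nat_pow_pow mult.commute)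
      also have "\<dots> = \<one>" using n by simp
      finally have "(t [^] q) [^] n = \<one>" .
      then have "(t [^] q) [^] dB = \<one>" using dB(2) tq n(1) by blast
      then show "t [^] (q * dB) = \<one>" using tc by (simp add: nat_pow_pow)
    qed
  next
    case False
    show ?thesis
    proof (intro exI[of _ dB] conjI ballI impI)
      show "dB > 0" using dB by simp
      fix t assume t: "t \<in> generate G (insert w W)" and tor: "\<exists>n::nat. n > 0 \<and> t [^] n = \<one>"
      obtain n :: nat where n: "n > 0" "t [^] n = \<one>" using tor by blast
      obtain b j where b: "b \<in> generate G W" "t = b \<otimes> w [^] (j::int)" using gen_insert[OF w W cw t] by blast
      have bc: "b \<in> carrier G" using b generate_in_carrier W by blast
      have "w \<otimes> b = b \<otimes> w" using comm_generate[OF w W cw b(1)] .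
      then have wb: "w \<otimes> b = b \<otimes> w" .
      have wg: "w [^] j \<in> generate G {w}"
        by (rule subgroup_int_pow_closed[OF generate_is_subgroup generate.incl]) (use w in auto)
      have bw: "b \<otimes> w [^] j = w [^] j \<otimes> b"
        by (rule comm_generate[OF bc _ _ wg]) (use w wb in auto)
      have "t [^] n = b [^] n \<otimes> (w [^] j) [^] n" unfolding b(2) by (rule pow_mult_distrib[OF bw bc int_pow_closed[OF w]])
      moreover have "(w [^] j) [^] n = w [^] (j * int n)"
      proof -
        have "(w [^] j) [^] n = (w [^] j) [^] (int n)" by (simp only: int_pow_int)
        also have "\<dots> = w [^] (j * int n)" using w by (rule int_pow_pow)
        finally show ?thesis .
      qed
      ultimately have "b [^] n \<otimes> w [^] (j * int n) = \<one>" using n by simp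
      then have "w [^] (j * int n) = inv (b [^] n)"
      proof -
        assume e: "b [^] n \<otimes> w [^] (j * int n) = \<one>"
        have "w [^] (j * int n) = inv (b [^] n) \<otimes> (b [^] n \<otimes> w [^] (j * int n))" using bc w by simp
        also have "\<dots> = inv (b [^] n)" using e bc by simp
        finally show ?thesis .
      qed
      moreover have "inv (b [^] n) \<in> generate G W"
        using subgroup.m_inv_closed[OF sgW subgroup_int_pow_closed[OF sgW b(1), of "int n"]] by (simp only: int_pow_int)
      ultimately have wj: "w [^] (j * int n) \<in> generate G W" by simp
      have "j = 0"
      proof (rule ccontr)
        assume "j \<noteq> 0"
        then have ne: "j * int n \<noteq> 0" using n by simp
        show False
        proof (cases "j * int n > 0")
          case True
          have "w [^] nat (j * int n) = w [^] (j * int n)" by (rule pow_nat) (use True in simp)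
          then have "w [^] nat (j * int n) \<in> generate G W" using wj by simp
          moreover have "nat (j * int n) > 0" using True by simp
          ultimately show False using False by blast
        next
          case False2: False
          then have pos: "- (j * int n) > 0" using ne by linarith
          have "w [^] (- (j * int n)) = inv (w [^] (j * int n))" using int_pow_neg[OF w] by simp
          then have "w [^] (- (j * int n)) \<in> generate G W" using wj subgroup.m_inv_closed[OF sgW] by simp
          moreover have "w [^] nat (- (j * int n)) = w [^] (- (j * int n))" by (rule pow_nat) (use pos in simp)
          ultimately have "w [^] nat (- (j * int n)) \<in> generate G W" by simp
          moreover have "nat (- (j * int n)) > 0" using pos by simp
          ultimately show False using False by blast
        qed
      qed
      then have "t = b" using b bc by simp
      then show "t [^] dB = \<one>" using dB(2) b(1) n by blast
    qed
  qed
qed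

end

context group begin

lemma alg_main:
  assumes y: "y \<in> carrier G" and fin: "finite (cls G y)"
  shows "\<exists>k::nat. k > 0 \<and> (\<exists>N. subgroup N G \<and> y [^] k \<in> N \<and> torsion_free G N
           \<and> (\<forall>a\<in>N. \<forall>b\<in>N. a \<otimes> b = b \<otimes> a) \<and> N \<lhd> G \<and> N \<subseteq> FC G)"
proof -
  define CX where "CX = cls G y"
  have CXc: "CX \<subseteq> carrier G" unfolding CX_def using cls_sub[OF y] .
  define F where "F = (\<lambda>i::nat. restrict (\<lambda>w. y [^] i \<otimes> w \<otimes> inv (y [^] i)) CX)"
  have "F ` UNIV \<subseteq> CX \<rightarrow>\<^sub>E CX"
  proof
    fix f assume "f \<in> F ` UNIV"
    then obtain i where "f = F i" by auto
    then show "f \<in> CX \<rightarrow>\<^sub>E CX" unfolding F_def CX_def using cls_conj_mem[OF y] y by auto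
  qed
  moreover have "finite (CX \<rightarrow>\<^sub>E CX)" using fin unfolding CX_def by (intro finite_PiE) auto
  ultimately have "finite (F ` UNIV)" using finite_subset by blast
  then have "\<not> inj F" using finite_imageD infinite_UNIV_nat by blast
  then obtain i j where ij: "i \<noteq> j" "F i = F j" unfolding inj_def by blast
  obtain i j where ij: "i < j" "F i = F j"
  proof (cases "i < j")
    case True then show ?thesis using that ij by blast
  next
    case False then show ?thesis using that[of j i] ij by auto
  qed
  define m where "m = j - i"
  have m: "m > 0" using ij unfolding m_def by simp
  define z where "z = y [^] m"
  have zc: "z \<in> carrier G" unfolding z_def using y by simp
  have yj: "y [^] j = y [^] i \<otimes> z" unfolding z_def m_def using y ij(1) by (simp add: nat_pow_mult)
  have zX: "z \<otimes> w = w \<otimes> z" if w: "w \<in> CX" for w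
  proof -
    have wc: "w \<in> carrier G" using w CXc by auto
    have "y [^] i \<otimes> w \<otimes> inv (y [^] i) = y [^] j \<otimes> w \<otimes> inv (y [^] j)"
      using fun_cong[OF ij(2), of w] w unfolding F_def by simp
    also have "\<dots> = y [^] i \<otimes> (z \<otimes> w \<otimes> inv z) \<otimes> inv (y [^] i)"
      unfolding yj using y zc wc by (simp add: m_assoc inv_mult_group)
    finally have e0: "y [^] i \<otimes> w \<otimes> inv (y [^] i) = y [^] i \<otimes> (z \<otimes> w \<otimes> inv z) \<otimes> inv (y [^] i)" .
    have e: "w = z \<otimes> w \<otimes> inv z"
      by (rule conj_cancel[OF wc _ nat_pow_closed[OF y] e0]) (use zc wc in simp)
    have "w \<otimes> z = (z \<otimes> w \<otimes> inv z) \<otimes> z" using e by (rule arg_cong)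
    also have "\<dots> = z \<otimes> w" using zc wc by (simp add: m_assoc)
    finally show ?thesis by simp
  qed
  define CZ where "CZ = cls G z"
  have Zc: "CZ \<subseteq> carrier G" unfolding CZ_def using cls_sub[OF zc] .
  have Zpow: "CZ = (\<lambda>w. w [^] m) ` CX"
  proof -
    have "(\<lambda>w. w [^] m) ` CX = (\<lambda>g. (g \<otimes> y \<otimes> inv g) [^] m) ` carrier G"
      unfolding CX_def cls_def by (simp add: image_image)
    also have "\<dots> = (\<lambda>g. g \<otimes> y [^] m \<otimes> inv g) ` carrier G"
      by (rule image_cong) (simp_all add: conj_pow[OF y])
    finally show ?thesis by (simp add: CZ_def cls_def z_def)
  qed
  have finZ: "finite CZ" using Zpow fin CX_def by simp
  have zZ: "z \<in> CZ" unfolding CZ_def using cls_mem[OF zc] .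
  have Zcomm: "\<forall>u\<in>CZ. \<forall>v\<in>CZ. u \<otimes> v = v \<otimes> u"
  proof (intro ballI)
    fix u v assume u: "u \<in> CZ" and v: "v \<in> CZ"
    obtain g where g: "g \<in> carrier G" "u = g \<otimes> z \<otimes> inv g" using u unfolding CZ_def cls_def by auto
    obtain w where w: "w \<in> CX" "v = w [^] m" using v Zpow by auto
    have wc: "w \<in> carrier G" using w CXc by auto
    define w' where "w' = inv g \<otimes> w \<otimes> inv (inv g)"
    have w'CX: "w' \<in> CX" unfolding w'_def CX_def
      by (rule cls_conj_mem[OF y w(1)[unfolded CX_def] inv_closed[OF g(1)]])
    have w'c: "w' \<in> carrier G" using w'CX CXc by auto
    have ww': "w = g \<otimes> w' \<otimes> inv g" unfolding w'_def using g wc by (simp add: m_assoc)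
    have "u \<otimes> w = g \<otimes> (z \<otimes> w') \<otimes> inv g" unfolding g(2) ww' using conj_mult[OF zc w'c g(1)] by simp
    also have "\<dots> = g \<otimes> (w' \<otimes> z) \<otimes> inv g" using zX[OF w'CX] by simp
    also have "\<dots> = w \<otimes> u" unfolding g(2) ww' using conj_mult[OF w'c zc g(1)] by simp
    finally have uw: "u \<otimes> w = w \<otimes> u" .
    have uc: "u \<in> carrier G" using u Zc by auto
    have "w [^] m \<otimes> u = u \<otimes> w [^] m" using group_commutes_pow[OF uw[symmetric] wc uc] .
    then show "u \<otimes> v = v \<otimes> u" using w(2) by simp
  qed
  define A where "A = generate G CZ"
  have sgA: "subgroup A G" unfolding A_def using generate_is_subgroup[OF Zc] .
  have Acomm: "\<forall>a\<in>A. \<forall>b\<in>A. a \<otimes> b = b \<otimes> a"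
    unfolding A_def using comm_generate2[OF Zc Zcomm] by blast
  have nA: "A \<lhd> G" unfolding A_def
  proof (rule normal_generateI[OF Zc])
    fix h g assume "h \<in> CZ" "g \<in> carrier G"
    then show "g \<otimes> h \<otimes> inv g \<in> CZ" unfolding CZ_def using cls_conj_mem[OF zc] by blast
  qed
  have ZF: "CZ \<subseteq> FCc"
  proof
    fix u assume u: "u \<in> CZ"
    obtain g where g: "g \<in> carrier G" "u = g \<otimes> z \<otimes> inv g" using u unfolding CZ_def cls_def by auto
    have "cls G u = cls G z" using cls_conj[OF zc g(1)] g(2) by simp
    then show "u \<in> FCc" unfolding FCc_def using u Zc finZ CZ_def by auto
  qed
  have AF: "A \<subseteq> FCc" unfolding A_def using generate_subgroup_incl[OF ZF FCc_subgroup] .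
  obtain d :: nat where d: "d > 0" "\<forall>t\<in>A. (\<exists>n::nat. n > 0 \<and> t [^] n = \<one>) \<longrightarrow> t [^] d = \<one>"
    using torsion_bound[OF finZ Zc Zcomm] unfolding A_def by blast
  define N where "N = (\<lambda>a. a [^] d) ` A"
  have Ac: "A \<subseteq> carrier G" using subgroup.subset[OF sgA] .
  have NA: "N \<subseteq> A"
  proof
    fix v assume "v \<in> N"
    then obtain a where a: "a \<in> A" "v = a [^] d" unfolding N_def by auto
    have "a [^] (int d) \<in> A" using subgroup_int_pow_closed[OF sgA a(1)] .
    then show "v \<in> A" using a(2) by (simp only: int_pow_int)
  qed
  have sgN: "subgroup N G"
  proof (rule subgroupI)
    show "N \<subseteq> carrier G" using NA Ac by auto
    show "N \<noteq> {}" unfolding N_def using subgroup.one_closed[OF sgA] by auto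
  next
    fix v assume "v \<in> N"
    then obtain a where a: "a \<in> A" "v = a [^] d" unfolding N_def by auto
    have ac: "a \<in> carrier G" using a(1) Ac by auto
    have "inv v = (inv a) [^] d" unfolding a(2) using nat_pow_inv[OF ac, of d] by simp
    then show "inv v \<in> N" unfolding N_def using subgroup.m_inv_closed[OF sgA a(1)] by auto
  next
    fix v v' assume "v \<in> N" "v' \<in> N"
    then obtain a a' where a: "a \<in> A" "v = a [^] d" and a': "a' \<in> A" "v' = a' [^] d" unfolding N_def by auto
    have ac: "a \<in> carrier G" "a' \<in> carrier G" using a(1) a'(1) Ac by auto
    have cm: "a \<otimes> a' = a' \<otimes> a" using Acomm a(1) a'(1) by blast
    have "v \<otimes> v' = (a \<otimes> a') [^] d"
      unfolding a(2) a'(2) by (rule pow_mult_distrib[OF cm ac, symmetric])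
    then show "v \<otimes> v' \<in> N" unfolding N_def using subgroup.m_closed[OF sgA a(1) a'(1)] by auto
  qed
  show ?thesis
  proof (intro exI[of _ "m * d"] conjI exI[of _ N])
    show "m * d > 0" using m d by simp
    show "subgroup N G" by (rule sgN)
    have "y [^] (m * d) = z [^] d" unfolding z_def using y by (simp add: nat_pow_pow)
    moreover have "z \<in> A" unfolding A_def using zZ by (rule generate.incl)
    ultimately show "y [^] (m * d) \<in> N" unfolding N_def by auto
    show "torsion_free G N" unfolding torsion_free_def
    proof (intro ballI allI impI)
      fix v n assume v: "v \<in> N" and n: "(n::nat) > 0" and e: "v [^] n = \<one>"
      obtain a where a: "a \<in> A" "v = a [^] d" using v unfolding N_def by auto
      have ac: "a \<in> carrier G" using a(1) Ac by auto
      have "a [^] (d * n) = \<one>" using e unfolding a(2) nat_pow_pow[OF ac] .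
      then have "a [^] d = \<one>" using d a(1) n by (metis nat_0_less_mult_iff)
      then show "v = \<one>" using a by simp
    qed
    show "\<forall>a\<in>N. \<forall>b\<in>N. a \<otimes> b = b \<otimes> a" using Acomm NA by blast
    show "N \<lhd> G" unfolding normal_inv_iff
    proof (intro conjI ballI)
      show "subgroup N G" by (rule sgN)
      fix g v assume g: "g \<in> carrier G" and v: "v \<in> N"
      obtain a where a: "a \<in> A" "v = a [^] d" using v unfolding N_def by auto
      have ac: "a \<in> carrier G" using a Ac by auto
      have "g \<otimes> v \<otimes> inv g = (g \<otimes> a \<otimes> inv g) [^] d" using conj_pow[OF ac g] a by simp
      moreover have "g \<otimes> a \<otimes> inv g \<in> A" using nA g a(1) unfolding normal_inv_iff by blast
      ultimately show "g \<otimes> v \<otimes> inv g \<in> N" unfolding N_def by auto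
    qed
    show "N \<subseteq> FC G"
    proof
      fix v assume "v \<in> N"
      then have "v \<in> FCc" using NA AF by auto
      then show "v \<in> FC G" using cls_FC unfolding FCc_def by auto
    qed
  qed
qed

end

lemma measure_disj_finite:
  fixes M :: "'a measure" and F :: "'a set set"
  assumes fin: "emeasure M (space M) \<noteq> \<infinity>" and p: "p > 0"
    and meas: "\<forall>S\<in>F. S \<in> sets M \<and> emeasure M S = p"
    and disj: "\<forall>S\<in>F. \<forall>S'\<in>F. S \<noteq> S' \<longrightarrow> S \<inter> S' = {}"
  shows "finite F"
proof (rule ccontr)
  assume inf: "infinite F"
  then obtain S0 where S0: "S0 \<in> F" by (metis finite.emptyI ex_in_conv)
  have "p \<le> emeasure M (space M)" using meas S0 emeasure_space by metis
  then have pfin: "p \<noteq> \<infinity>" using fin by (auto simp: top_unique)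
  obtain r where r: "p = ennreal r" "r \<ge> 0" using pfin by (cases p rule: ennreal_cases) auto
  have rpos: "r > 0" using p r by simp
  define B where "B = enn2real (emeasure M (space M))"
  have B: "emeasure M (space M) = ennreal B" "B \<ge> 0" unfolding B_def using fin
    by (auto simp: ennreal_enn2real_if)
  obtain k :: nat where k: "B < of_nat k * r" using ex_less_of_nat_mult[OF rpos] by blast
  obtain F' where F': "F' \<subseteq> F" "finite F'" "card F' = k" using infinite_arbitrarily_large[OF inf] by blast
  have "(\<Sum>S\<in>F'. emeasure M S) = emeasure M (\<Union>S\<in>F'. S)"
  proof (rule sum_emeasure)
    show "(\<lambda>S. S) ` F' \<subseteq> sets M" using F' meas by auto
    show "disjoint_family_on (\<lambda>S. S) F'" unfolding disjoint_family_on_def using F' disj by blast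
    show "finite F'" by (rule F'(2))
  qed
  moreover have "(\<Sum>S\<in>F'. emeasure M S) = of_nat k * p"
  proof -
    have "(\<Sum>S\<in>F'. emeasure M S) = (\<Sum>S\<in>F'. p)" using F'(1) meas by (intro sum.cong) auto
    then show ?thesis using F'(3) by simp
  qed
  moreover have "emeasure M (\<Union>S\<in>F'. S) \<le> emeasure M (space M)"
    by (rule emeasure_mono) (use F' meas sets.sets_into_space in blast, simp)
  ultimately have "of_nat k * ennreal r \<le> ennreal B" using B r by simp
  then have "ennreal (of_nat k * r) \<le> ennreal B" using ennreal_mult[of "real k" r] r(2) by (simp add: ennreal_of_nat_eq_real_of_nat)
  then have "of_nat k * r \<le> B" using B by (simp add: ennreal_le_iff)
  then show False using k by simp
qed

context group begin

lemma centfin: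
  assumes hG: "normalized_haar G T (carrier G) \<mu>" and a: "a \<in> carrier G"
    and pos: "emeasure \<mu> (centralizer G a) > 0"
  shows "finite (cls G a)"
proof -
  have sp: "space \<mu> = carrier G" and one: "emeasure \<mu> (carrier G) = 1"
    and inv: "\<forall>h\<in>carrier G. \<forall>A\<in>sets \<mu>. emeasure \<mu> (h <# A) = emeasure \<mu> A"
    using hG unfolding normalized_haar_def by auto
  define C where "C = centralizer G a"
  have sg: "subgroup C G" unfolding C_def by (rule centralizer_subgroup[OF a])
  have Cs: "C \<in> sets \<mu>" using pos emeasure_notin_sets unfolding C_def by fastforce
  have eq: "emeasure \<mu> (g <# C) = emeasure \<mu> C" if "g \<in> carrier G" for g using inv that Cs by blast
  have gs: "g <# C \<in> sets \<mu>" if "g \<in> carrier G" for g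
    using eq[OF that] pos emeasure_notin_sets unfolding C_def by fastforce
  have "finite ((\<lambda>g. g <# C) ` carrier G)"
  proof (rule measure_disj_finite[where M = \<mu> and p = "emeasure \<mu> C"])
    show "emeasure \<mu> (space \<mu>) \<noteq> \<infinity>" using sp one by simp
    show "emeasure \<mu> C > 0" using pos unfolding C_def .
    show "\<forall>S\<in>(\<lambda>g. g <# C) ` carrier G. S \<in> sets \<mu> \<and> emeasure \<mu> S = emeasure \<mu> C"
      using eq gs by auto
    show "\<forall>S\<in>(\<lambda>g. g <# C) ` carrier G. \<forall>S'\<in>(\<lambda>g. g <# C) ` carrier G. S \<noteq> S' \<longrightarrow> S \<inter> S' = {}"
    proof (intro ballI impI)
      fix S S' assume S: "S \<in> (\<lambda>g. g <# C) ` carrier G" and S': "S' \<in> (\<lambda>g. g <# C) ` carrier G"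
        and ne: "S \<noteq> S'"
      obtain g where g: "g \<in> carrier G" "S = g <# C" using S by auto
      obtain g' where g': "g' \<in> carrier G" "S' = g' <# C" using S' by auto
      show "S \<inter> S' = {}"
      proof (rule ccontr)
        assume "S \<inter> S' \<noteq> {}"
        then obtain u where u: "u \<in> g <# C" "u \<in> g' <# C" using g g' by auto
        have "g <# C = u <# C" by (rule l_repr_independence[OF u(1) g(1) sg])
        moreover have "g' <# C = u <# C" by (rule l_repr_independence[OF u(2) g'(1) sg])
        ultimately show False using ne g g' by simp
      qed
    qed
  qed
  then have "finite ((\<lambda>g. g \<otimes> a \<otimes> inv g) ` carrier G)"
  proof (rule fin_transfer)
    show "\<forall>g\<in>carrier G. \<forall>g'\<in>carrier G. g <# C = g' <# C \<longrightarrow> g \<otimes> a \<otimes> inv g = g' \<otimes> a \<otimes> inv g'"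
    proof (intro ballI impI)
      fix g g' assume g: "g \<in> carrier G" and g': "g' \<in> carrier G" and e: "g <# C = g' <# C"
      have "g \<in> g <# C" unfolding l_coset_def using subgroup.one_closed[OF sg] g by force
      then have "g \<in> g' <# C" using e by simp
      then obtain c where c: "c \<in> C" "g = g' \<otimes> c" unfolding l_coset_def by auto
      have cc: "c \<in> carrier G" and ca: "c \<otimes> a = a \<otimes> c" using c(1) unfolding C_def centralizer_def by auto
      have "g \<otimes> a \<otimes> inv g = g' \<otimes> (c \<otimes> a) \<otimes> inv c \<otimes> inv g'"
        using c(2) cc g' a by (simp add: m_assoc inv_mult_group)
      also have "\<dots> = g' \<otimes> (a \<otimes> c) \<otimes> inv c \<otimes> inv g'" using ca by simp
      also have "\<dots> = g' \<otimes> a \<otimes> inv g'" using cc g' a by (simp add: m_assoc)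
      finally show "g \<otimes> a \<otimes> inv g = g' \<otimes> a \<otimes> inv g'" .
    qed
  qed
  then show ?thesis unfolding cls_def .
qed

end

theorem lemma2p2:
  fixes G :: "('a, 'b) monoid_scheme" and T :: "'a topology" and x :: 'a
    and \<mu>H \<mu>G :: "'a measure"
  assumes "compact_group G T"
    and "x \<in> carrier G"
    and "normalized_haar G T (carrier G) \<mu>G"
    and "normalized_haar G T (top_gen G T x) \<mu>H"
    and "commuting_prob G \<mu>H \<mu>G > 0"
  shows "\<exists>e::nat. e > 0 \<and> (\<exists>N. subgroup N G \<and> x [^]\<^bsub>G\<^esub> e \<in> N \<and> torsion_free G N
           \<and> (\<forall>a\<in>N. \<forall>b\<in>N. a \<otimes>\<^bsub>G\<^esub> b = b \<otimes>\<^bsub>G\<^esub> a) \<and> N \<lhd> G \<and> N \<subseteq> FC G)"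
proof -
  have grp: "group G" and top: "topspace T = carrier G"
    using assms(1) unfolding compact_group_def by auto
  interpret group G by (rule grp)
  have x: "x \<in> carrier G" by (rule assms(2))
  define H where "H = top_gen G T x"
  have spH: "space \<mu>H = H" and oneH: "emeasure \<mu>H H = 1"
    and invH: "\<forall>h\<in>H. \<forall>A\<in>sets \<mu>H. emeasure \<mu>H (h <#\<^bsub>G\<^esub> A) = emeasure \<mu>H A"
    using assms(4) unfolding normalized_haar_def H_def by auto
  have Hc: "H \<subseteq> carrier G" unfolding H_def top_gen_def using closure_of_subset_topspace top by metis
  have xpow: "x [^]\<^bsub>G\<^esub> (i::nat) \<in> H" for i
  proof -
    have "x [^]\<^bsub>G\<^esub> (int i) \<in> generate G {x}"
      by (rule subgroup_int_pow_closed[OF generate_is_subgroup generate.incl]) (use x in auto)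
    then have "x [^]\<^bsub>G\<^esub> i \<in> generate G {x}" by (simp only: int_pow_int)
    moreover have "generate G {x} \<subseteq> topspace T" using generate_incl[of "{x}"] x top by auto
    ultimately show ?thesis unfolding H_def top_gen_def using closure_of_subset by blast
  qed
  define f where "f = (\<lambda>h. emeasure \<mu>G (centralizer G h))"
  have "0 < integral\<^sup>N \<mu>H f" using assms(5) unfolding commuting_prob_def f_def .
  then obtain g where g: "simple_function \<mu>H g" "g \<le> f" "0 < integral\<^sup>S \<mu>H g"
    unfolding nn_integral_def less_SUP_iff by auto
  have "\<exists>v\<in>g ` space \<mu>H. 0 < v * emeasure \<mu>H (g -` {v} \<inter> space \<mu>H)"
  proof (rule ccontr)
    assume "\<not> ?thesis"
    then have "\<forall>v\<in>g ` space \<mu>H. v * emeasure \<mu>H (g -` {v} \<inter> space \<mu>H) = 0"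
      by (auto simp: not_less)
    then have "integral\<^sup>S \<mu>H g = 0" unfolding simple_integral_def by (intro sum.neutral) auto
    then show False using g(3) by simp
  qed
  then obtain v where v: "0 < v * emeasure \<mu>H (g -` {v} \<inter> space \<mu>H)" by blast
  define A where "A = g -` {v} \<inter> space \<mu>H"
  have vne: "v \<noteq> 0" using v by auto
  have Ane: "emeasure \<mu>H A \<noteq> 0" using v unfolding A_def by auto
  have vpos: "0 < v" using vne by (metis not_gr_zero)
  have Apos: "0 < emeasure \<mu>H A" using Ane by (metis not_gr_zero)
  have As: "A \<in> sets \<mu>H" unfolding A_def using simple_functionD(2)[OF g(1)] .
  have AH: "A \<subseteq> H" unfolding A_def spH by auto
  have Af: "0 < emeasure \<mu>G (centralizer G h)" if "h \<in> A" for h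
  proof -
    have "g h = v" using that unfolding A_def by auto
    moreover have "g h \<le> f h" using g(2) by (simp add: le_fun_def)
    ultimately show ?thesis using vpos unfolding f_def by simp
  qed
  have AF: "A \<subseteq> FCc"
  proof
    fix h assume h: "h \<in> A"
    have hc: "h \<in> carrier G" using h AH Hc by auto
    show "h \<in> FCc" unfolding FCc_def using centfin[OF assms(3) hc Af[OF h]] hc by auto
  qed
  have Pm: "emeasure \<mu>H (x [^]\<^bsub>G\<^esub> i <#\<^bsub>G\<^esub> A) = emeasure \<mu>H A" for i :: nat using invH xpow As by blast
  have Ps: "x [^]\<^bsub>G\<^esub> i <#\<^bsub>G\<^esub> A \<in> sets \<mu>H" for i :: nat
    using Pm[of i] Apos emeasure_notin_sets by fastforce
  obtain a where a: "a \<in> A" using Apos by (metis emeasure_empty less_irrefl equals0I)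
  have "\<exists>i j :: nat. i < j \<and> (x [^]\<^bsub>G\<^esub> i <#\<^bsub>G\<^esub> A) \<inter> (x [^]\<^bsub>G\<^esub> j <#\<^bsub>G\<^esub> A) \<noteq> {}"
  proof (rule ccontr)
    assume nd: "\<not> ?thesis"
    have "finite ((\<lambda>i::nat. x [^]\<^bsub>G\<^esub> i <#\<^bsub>G\<^esub> A) ` UNIV)"
    proof (rule measure_disj_finite[where M = \<mu>H and p = "emeasure \<mu>H A"])
      show "emeasure \<mu>H (space \<mu>H) \<noteq> \<infinity>" using spH oneH by simp
      show "emeasure \<mu>H A > 0" by (rule Apos)
      show "\<forall>S\<in>(\<lambda>i::nat. x [^]\<^bsub>G\<^esub> i <#\<^bsub>G\<^esub> A) ` UNIV. S \<in> sets \<mu>H \<and> emeasure \<mu>H S = emeasure \<mu>H A"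
        using Ps Pm by auto
      show "\<forall>S\<in>(\<lambda>i::nat. x [^]\<^bsub>G\<^esub> i <#\<^bsub>G\<^esub> A) ` UNIV. \<forall>S'\<in>(\<lambda>i::nat. x [^]\<^bsub>G\<^esub> i <#\<^bsub>G\<^esub> A) ` UNIV. S \<noteq> S' \<longrightarrow> S \<inter> S' = {}"
      proof (intro ballI impI)
        fix S S' assume S: "S \<in> (\<lambda>i::nat. x [^]\<^bsub>G\<^esub> i <#\<^bsub>G\<^esub> A) ` UNIV" and S': "S' \<in> (\<lambda>i::nat. x [^]\<^bsub>G\<^esub> i <#\<^bsub>G\<^esub> A) ` UNIV"
          and ne: "S \<noteq> S'"
        obtain i j :: nat where ij: "S = x [^]\<^bsub>G\<^esub> i <#\<^bsub>G\<^esub> A" "S' = x [^]\<^bsub>G\<^esub> j <#\<^bsub>G\<^esub> A" using S S' by auto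
        have "i \<noteq> j" using ne ij by auto
        then have "i < j \<or> j < i" by arith
        then show "S \<inter> S' = {}"
        proof
          assume "i < j" then show ?thesis using nd ij by blast
        next
          assume "j < i" then have "S' \<inter> S = {}" using nd ij by blast
          then show ?thesis by blast
        qed
      qed
    qed
    then have "\<not> inj (\<lambda>i::nat. x [^]\<^bsub>G\<^esub> i <#\<^bsub>G\<^esub> A)" using finite_imageD infinite_UNIV_nat by blast
    then obtain i j :: nat where ij: "i \<noteq> j" "x [^]\<^bsub>G\<^esub> i <#\<^bsub>G\<^esub> A = x [^]\<^bsub>G\<^esub> j <#\<^bsub>G\<^esub> A" unfolding inj_def by blast
    have "x [^]\<^bsub>G\<^esub> i \<otimes>\<^bsub>G\<^esub> a \<in> x [^]\<^bsub>G\<^esub> i <#\<^bsub>G\<^esub> A" unfolding l_coset_def using a by auto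
    then have ne: "(x [^]\<^bsub>G\<^esub> i <#\<^bsub>G\<^esub> A) \<inter> (x [^]\<^bsub>G\<^esub> j <#\<^bsub>G\<^esub> A) \<noteq> {}" using ij by auto
    have "i < j \<or> j < i" using ij by arith
    then show False
    proof
      assume "i < j" then show False using nd ne by blast
    next
      assume "j < i" then show False using nd ne by (metis inf_commute)
    qed
  qed
  then obtain i j :: nat and u where ij: "i < j" "u \<in> x [^]\<^bsub>G\<^esub> i <#\<^bsub>G\<^esub> A" "u \<in> x [^]\<^bsub>G\<^esub> j <#\<^bsub>G\<^esub> A" by blast
  obtain a1 where a1: "a1 \<in> A" "u = x [^]\<^bsub>G\<^esub> i \<otimes>\<^bsub>G\<^esub> a1" using ij(2) unfolding l_coset_def by auto
  obtain b1 where b1: "b1 \<in> A" "u = x [^]\<^bsub>G\<^esub> j \<otimes>\<^bsub>G\<^esub> b1" using ij(3) unfolding l_coset_def by auto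
  define e where "e = j - i"
  have e: "e > 0" using ij unfolding e_def by simp
  have a1c: "a1 \<in> carrier G" and b1c: "b1 \<in> carrier G" using a1 b1 AH Hc by auto
  have jie: "j = i + e" using ij(1) unfolding e_def by simp
  have "x [^]\<^bsub>G\<^esub> i \<otimes>\<^bsub>G\<^esub> a1 = x [^]\<^bsub>G\<^esub> j \<otimes>\<^bsub>G\<^esub> b1" using a1(2) b1(2) by simp
  also have "x [^]\<^bsub>G\<^esub> j = x [^]\<^bsub>G\<^esub> i \<otimes>\<^bsub>G\<^esub> x [^]\<^bsub>G\<^esub> e"
    unfolding jie using nat_pow_mult[OF x, of i e] by simp
  finally have "x [^]\<^bsub>G\<^esub> i \<otimes>\<^bsub>G\<^esub> a1 = x [^]\<^bsub>G\<^esub> i \<otimes>\<^bsub>G\<^esub> (x [^]\<^bsub>G\<^esub> e \<otimes>\<^bsub>G\<^esub> b1)"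
    using x b1c by (simp add: m_assoc)
  then have "a1 = x [^]\<^bsub>G\<^esub> e \<otimes>\<^bsub>G\<^esub> b1" using x a1c b1c by simp
  then have xe: "x [^]\<^bsub>G\<^esub> e = a1 \<otimes>\<^bsub>G\<^esub> inv\<^bsub>G\<^esub> b1" using x b1c by (simp add: m_assoc)
  have "a1 \<otimes>\<^bsub>G\<^esub> inv\<^bsub>G\<^esub> b1 \<in> FCc"
    using a1(1) b1(1) AF subgroup.m_closed[OF FCc_subgroup] subgroup.m_inv_closed[OF FCc_subgroup] by blast
  then have "finite (cls G (x [^]\<^bsub>G\<^esub> e))" unfolding FCc_def xe by auto
  then obtain k :: nat and N where k: "k > 0" "subgroup N G" "(x [^]\<^bsub>G\<^esub> e) [^]\<^bsub>G\<^esub> k \<in> N" "torsion_free G N"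
    "\<forall>a\<in>N. \<forall>b\<in>N. a \<otimes>\<^bsub>G\<^esub> b = b \<otimes>\<^bsub>G\<^esub> a" "N \<lhd> G" "N \<subseteq> FC G"
    using alg_main[of "x [^]\<^bsub>G\<^esub> e"] x by auto
  show ?thesis
  proof (intro exI[of _ "e * k"] conjI exI[of _ N])
    show "e * k > 0" using e k by simp
    show "x [^]\<^bsub>G\<^esub> (e * k) \<in> N" using k(3) x by (simp add: nat_pow_pow)
  qed (use k in auto)
qed

end
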